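(* Let $\rho$ be a monic PBPO rule in a category. Then ${\Rightarrow_\rho} = {\Rightarrow^{\rightarrowtail}_\rho}$ and ${\Rightarrow^{\mathrm{SM}}_\rho} = {\Rightarrow^{\mathrm{PBPO}^{+}}_\rho}$, where in the latter $\rho$ is regarded as a PBPO$^{+}$ rule by forgetting $t_R$, $r'$ and $R'$.
   Context: A PBPO rule consists of morphisms $l : K \to L$, $r : K \to R$, $t_L : L \to L'$, $t_K : K \to K'$, $t_R : R \to R'$, $l' : K' \to L'$, $r' : K' \to R'$ with $t_L \circ l = l' \circ t_K$ and $t_R \circ r = r' \circ t_K$; it is canonical if $(l,t_K)$ is a pullback of $(t_L,l')$ and $(r',t_R)$ a pushout of $(t_K,r)$, and monic if canonical with $t_L$ mono. A PBPO step $G_L \Rightarrow_\rho^{m,\alpha} G_R$: $m : L \to G_L$, $\alpha : G_L \to L'$ with $t_L = \alpha \circ m$; a pullback $G_L \xleftarrow{g_L} G_K \xrightarrow{u'} K'$ of $\alpha,l'$; the unique $u : K \to G_K$ with $g_L \circ u = m \circ l$ and $u' \circ u = t_K$; a pushout $G_K \xrightarrow{g_R} G_R \xleftarrow{w} R$ of $u,r$. ${\Rightarrow_\rho}$ relates $G_L,G_R$ if such a step exists for some $m,\alpha$; ${\Rightarrow^{\rightarrowtail}_\rho}$ requires $m$ monic; ${\Rightarrow^{\mathrm{SM}}_\rho}$ requires that $L \xleftarrow{1_L} L \xrightarrow{m} G_L$ is a pullback of $t_L$ and $\alpha$. A PBPO$^{+}$ rule consists of $l : K \to L$, $r : K \to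 R$, monos $t_L, t_K$ and $l' : K' \to L'$ with $(l,t_K)$ a pullback of $(t_L,l')$. A PBPO$^{+}$ step $G_L \Rightarrow^{\mathrm{PBPO}^{+}}_\rho G_R$ holds if there is $\alpha : G_L \to L'$ and $m : L \to G_L$ such that $L \xleftarrow{1_L} L \xrightarrow{m} G_L$ is a pullback of $t_L,\alpha$; a pullback $G_L \xleftarrow{g_L} G_K \xrightarrow{u'} K'$ of $\alpha,l'$; the unique $u : K \to G_K$ with $t_K = u' \circ u$; and a pushout $G_K \xrightarrow{g_R} G_R \xleftarrow{w} R$ of $u$ and $r$. *)

theory Defs
  imports Main
begin

record ('o, 'm) cat =
  Ob   :: "'o set"
  Ar   :: "'m set"
  Dom  :: "'m \<Rightarrow> 'o"
  Cod  :: "'m \<Rightarrow> 'o"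
  Idm  :: "'o \<Rightarrow> 'm"
  Comp :: "'m \<Rightarrow> 'm \<Rightarrow> 'm"   (* Comp C g f = g \<circ> f *)

definition hom :: "('o, 'm) cat \<Rightarrow> 'm \<Rightarrow> 'o \<Rightarrow> 'o \<Rightarrow> bool" where
  "hom C f X Y \<longleftrightarrow> f \<in> Ar C \<and> Dom C f = X \<and> Cod C f = Y"

definition category :: "('o, 'm) cat \<Rightarrow> bool" where
  "category C \<longleftrightarrow>
     (\<forall>f \<in> Ar C. Dom C f \<in> Ob C \<and> Cod C f \<in> Ob C) \<and>
     (\<forall>X \<in> Ob C. hom C (Idm C X) X X) \<and>
     (\<forall>f \<in> Ar C. \<forall>g \<in> Ar C. Cod C f = Dom C g \<longrightarrow> hom C (Comp C g f) (Dom C f) (Cod C g)) \<and>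
     (\<forall>f \<in> Ar C. Comp C f (Idm C (Dom C f)) = f \<and> Comp C (Idm C (Cod C f)) f = f) \<and>
     (\<forall>f \<in> Ar C. \<forall>g \<in> Ar C. \<forall>h \<in> Ar C. Cod C f = Dom C g \<longrightarrow> Cod C g = Dom C h \<longrightarrow>
        Comp C h (Comp C g f) = Comp C (Comp C h g) f)"

definition mono :: "('o, 'm) cat \<Rightarrow> 'm \<Rightarrow> bool" where
  "mono C f \<longleftrightarrow> f \<in> Ar C \<and>
     (\<forall>g \<in> Ar C. \<forall>h \<in> Ar C. Cod C g = Dom C f \<longrightarrow> Cod C h = Dom C f \<longrightarrow> Dom C g = Dom C h \<longrightarrow>
        Comp C f g = Comp C f h \<longrightarrow> g = h)"

definition is_pullback :: "('o, 'm) cat \<Rightarrow> 'o \<Rightarrow> 'm \<Rightarrow> 'm \<Rightarrow> 'm \<Rightarrow> 'm \<Rightarrow> bool" where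
  "is_pullback C P p1 p2 f g \<longleftrightarrow>
     f \<in> Ar C \<and> g \<in> Ar C \<and> Cod C f = Cod C g \<and>
     hom C p1 P (Dom C f) \<and> hom C p2 P (Dom C g) \<and>
     Comp C f p1 = Comp C g p2 \<and>
     (\<forall>Q q1 q2. hom C q1 Q (Dom C f) \<longrightarrow> hom C q2 Q (Dom C g) \<longrightarrow> Comp C f q1 = Comp C g q2 \<longrightarrow>
        (\<exists>!u. hom C u Q P \<and> Comp C p1 u = q1 \<and> Comp C p2 u = q2))"

definition is_pushout :: "('o, 'm) cat \<Rightarrow> 'o \<Rightarrow> 'm \<Rightarrow> 'm \<Rightarrow> 'm \<Rightarrow> 'm \<Rightarrow> bool" where
  "is_pushout C Q q1 q2 f g \<longleftrightarrow>
     f \<in> Ar C \<and> g \<in> Ar C \<and> Dom C f = Dom C g \<and>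
     hom C q1 (Cod C f) Q \<and> hom C q2 (Cod C g) Q \<and>
     Comp C q1 f = Comp C q2 g \<and>
     (\<forall>P s1 s2. hom C s1 (Cod C f) P \<longrightarrow> hom C s2 (Cod C g) P \<longrightarrow> Comp C s1 f = Comp C s2 g \<longrightarrow>
        (\<exists>!u. hom C u Q P \<and> Comp C u q1 = s1 \<and> Comp C u q2 = s2))"

record ('o, 'm) pbpo_rule =
  oL :: 'o  oK :: 'o  oR :: 'o  oL' :: 'o  oK' :: 'o  oR' :: 'o
  rl :: 'm  rr :: 'm  tL :: 'm  tK :: 'm  tR :: 'm  rl' :: 'm  rr' :: 'm

definition pbpo_rule :: "('o, 'm) cat \<Rightarrow> ('o, 'm) pbpo_rule \<Rightarrow> bool" where
  "pbpo_rule C \<rho> \<longleftrightarrow>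
     hom C (rl \<rho>) (oK \<rho>) (oL \<rho>) \<and> hom C (rr \<rho>) (oK \<rho>) (oR \<rho>) \<and>
     hom C (tL \<rho>) (oL \<rho>) (oL' \<rho>) \<and> hom C (tK \<rho>) (oK \<rho>) (oK' \<rho>) \<and>
     hom C (tR \<rho>) (oR \<rho>) (oR' \<rho>) \<and>
     hom C (rl' \<rho>) (oK' \<rho>) (oL' \<rho>) \<and> hom C (rr' \<rho>) (oK' \<rho>) (oR' \<rho>) \<and>
     Comp C (tL \<rho>) (rl \<rho>) = Comp C (rl' \<rho>) (tK \<rho>) \<and>
     Comp C (tR \<rho>) (rr \<rho>) = Comp C (rr' \<rho>) (tK \<rho>)"

definition canonical_pbpo_rule :: "('o, 'm) cat \<Rightarrow> ('o, 'm) pbpo_rule \<Rightarrow> bool" where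
  "canonical_pbpo_rule C \<rho> \<longleftrightarrow> pbpo_rule C \<rho> \<and>
     is_pullback C (oK \<rho>) (rl \<rho>) (tK \<rho>) (tL \<rho>) (rl' \<rho>) \<and>
     is_pushout C (oR' \<rho>) (rr' \<rho>) (tR \<rho>) (tK \<rho>) (rr \<rho>)"

definition monic_pbpo_rule :: "('o, 'm) cat \<Rightarrow> ('o, 'm) pbpo_rule \<Rightarrow> bool" where
  "monic_pbpo_rule C \<rho> \<longleftrightarrow> canonical_pbpo_rule C \<rho> \<and> mono C (tL \<rho>)"

definition pbpo_step ::
  "('o, 'm) cat \<Rightarrow> ('o, 'm) pbpo_rule \<Rightarrow> 'm \<Rightarrow> 'm \<Rightarrow> 'o \<Rightarrow> 'o \<Rightarrow> bool" where
  "pbpo_step C \<rho> m \<alpha> GL GR \<longleftrightarrow>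
     hom C m (oL \<rho>) GL \<and> hom C \<alpha> GL (oL' \<rho>) \<and> tL \<rho> = Comp C \<alpha> m \<and>
     (\<exists>GK gL u' u gR w.
        is_pullback C GK gL u' \<alpha> (rl' \<rho>) \<and>
        hom C u (oK \<rho>) GK \<and> Comp C gL u = Comp C m (rl \<rho>) \<and> Comp C u' u = tK \<rho> \<and>
        (\<forall>v. hom C v (oK \<rho>) GK \<and> Comp C gL v = Comp C m (rl \<rho>) \<and> Comp C u' v = tK \<rho> \<longrightarrow> v = u) \<and>
        is_pushout C GR gR w u (rr \<rho>))"

definition pbpo_rel :: "('o, 'm) cat \<Rightarrow> ('o, 'm) pbpo_rule \<Rightarrow> 'o \<Rightarrow> 'o \<Rightarrow> bool" where
  "pbpo_rel C \<rho> GL GR \<longleftrightarrow> (\<exists>m \<alpha>. pbpo_step C \<rho> m \<alpha> GL GR)"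

definition pbpo_mono_rel :: "('o, 'm) cat \<Rightarrow> ('o, 'm) pbpo_rule \<Rightarrow> 'o \<Rightarrow> 'o \<Rightarrow> bool" where
  "pbpo_mono_rel C \<rho> GL GR \<longleftrightarrow> (\<exists>m \<alpha>. pbpo_step C \<rho> m \<alpha> GL GR \<and> mono C m)"

definition pbpo_sm_rel :: "('o, 'm) cat \<Rightarrow> ('o, 'm) pbpo_rule \<Rightarrow> 'o \<Rightarrow> 'o \<Rightarrow> bool" where
  "pbpo_sm_rel C \<rho> GL GR \<longleftrightarrow> (\<exists>m \<alpha>. pbpo_step C \<rho> m \<alpha> GL GR \<and>
     is_pullback C (oL \<rho>) (Idm C (oL \<rho>)) m (tL \<rho>) \<alpha>)"

text \<open>PBPO-plus step, using only the components \<open>L, K, R, L', K', l, r, t_L, t_K, l'\<close> of the rule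
  (i.e. the rule regarded as a PBPO-plus rule by forgetting \<open>t_R, r', R'\<close>).\<close>
definition pbpo_plus_rel :: "('o, 'm) cat \<Rightarrow> ('o, 'm) pbpo_rule \<Rightarrow> 'o \<Rightarrow> 'o \<Rightarrow> bool" where
  "pbpo_plus_rel C \<rho> GL GR \<longleftrightarrow>
     (\<exists>m \<alpha>. hom C m (oL \<rho>) GL \<and> hom C \<alpha> GL (oL' \<rho>) \<and>
        is_pullback C (oL \<rho>) (Idm C (oL \<rho>)) m (tL \<rho>) \<alpha> \<and>
        (\<exists>GK gL u' u gR w.
           is_pullback C GK gL u' \<alpha> (rl' \<rho>) \<and>
           hom C u (oK \<rho>) GK \<and> Comp C u' u = tK \<rho> \<and>
           (\<forall>v. hom C v (oK \<rho>) GK \<and> Comp C u' v = tK \<rho> \<longrightarrow> v = u) \<and>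
           is_pushout C GR gR w u (rr \<rho>)))"

end

theory Submission
  imports Defs
begin

lemma cat_comp_hom: "category C \<Longrightarrow> hom C f X Y \<Longrightarrow> hom C g Y Z \<Longrightarrow> hom C (Comp C g f) X Z"
  unfolding category_def hom_def by metis

lemma cat_assoc: "category C \<Longrightarrow> hom C f X Y \<Longrightarrow> hom C g Y Z \<Longrightarrow> hom C h Z W \<Longrightarrow>
   Comp C h (Comp C g f) = Comp C (Comp C h g) f"
  unfolding category_def hom_def by metis

lemma cat_idl: "category C \<Longrightarrow> hom C f X Y \<Longrightarrow> Comp C (Idm C Y) f = f"
  unfolding category_def hom_def by metis

lemma cat_idr: "category C \<Longrightarrow> hom C f X Y \<Longrightarrow> Comp C f (Idm C X) = f"
  unfolding category_def hom_def by metis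

lemma key:
  assumes C: "category C" and r: "pbpo_rule C \<rho>"
    and pb: "is_pullback C (oL \<rho>) (Idm C (oL \<rho>)) m (tL \<rho>) \<alpha>"
    and a: "hom C \<alpha> GL (oL' \<rho>)"
    and pb2: "is_pullback C GK gL u' \<alpha> (rl' \<rho>)"
    and v: "hom C v (oK \<rho>) GK" and vu: "Comp C u' v = tK \<rho>"
  shows "Comp C gL v = Comp C m (rl \<rho>)"
proof -
  have gL: "hom C gL GK GL" and u': "hom C u' GK (oK' \<rho>)" and sq: "Comp C \<alpha> gL = Comp C (rl' \<rho>) u'"
    using pb2 a r unfolding is_pullback_def pbpo_rule_def hom_def by auto
  have l: "hom C (rl \<rho>) (oK \<rho>) (oL \<rho>)" and l': "hom C (rl' \<rho>) (oK' \<rho>) (oL' \<rho>)"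
    and tL: "hom C (tL \<rho>) (oL \<rho>) (oL' \<rho>)"
    and sq2: "Comp C (tL \<rho>) (rl \<rho>) = Comp C (rl' \<rho>) (tK \<rho>)"
    using r unfolding pbpo_rule_def by auto
  have gv: "hom C (Comp C gL v) (oK \<rho>) GL" using cat_comp_hom[OF C v gL] .
  have "Comp C \<alpha> (Comp C gL v) = Comp C (Comp C \<alpha> gL) v" using cat_assoc[OF C v gL a] .
  also have "\<dots> = Comp C (Comp C (rl' \<rho>) u') v" using sq by simp
  also have "\<dots> = Comp C (rl' \<rho>) (Comp C u' v)" using cat_assoc[OF C v u' l'] by simp
  also have "\<dots> = Comp C (tL \<rho>) (rl \<rho>)" using vu sq2 by simp
  finally have eq: "Comp C (tL \<rho>) (rl \<rho>) = Comp C \<alpha> (Comp C gL v)" by simp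
  have dt: "Dom C (tL \<rho>) = oL \<rho>" and da: "Dom C \<alpha> = GL" using tL a unfolding hom_def by auto
  have univ: "\<forall>Q q1 q2. hom C q1 Q (Dom C (tL \<rho>)) \<longrightarrow> hom C q2 Q (Dom C \<alpha>) \<longrightarrow> Comp C (tL \<rho>) q1 = Comp C \<alpha> q2 \<longrightarrow>
        (\<exists>!w. hom C w Q (oL \<rho>) \<and> Comp C (Idm C (oL \<rho>)) w = q1 \<and> Comp C m w = q2)"
    using pb unfolding is_pullback_def by blast
  have "\<exists>!w. hom C w (oK \<rho>) (oL \<rho>) \<and> Comp C (Idm C (oL \<rho>)) w = rl \<rho> \<and> Comp C m w = Comp C gL v"
    using univ[rule_format, of "rl \<rho>" "oK \<rho>" "Comp C gL v"] l gv eq dt da by simp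
  then obtain w where w: "hom C w (oK \<rho>) (oL \<rho>)" "Comp C (Idm C (oL \<rho>)) w = rl \<rho>" "Comp C m w = Comp C gL v"
    by blast
  have "w = rl \<rho>" using w(2) cat_idl[OF C w(1)] by simp
  thus ?thesis using w(3) by simp
qed

theorem proposition1:
  fixes C :: "('o, 'm) cat" and \<rho> :: "('o, 'm) pbpo_rule"
  assumes "category C" and "monic_pbpo_rule C \<rho>"
  shows "pbpo_rel C \<rho> = pbpo_mono_rel C \<rho> \<and> pbpo_sm_rel C \<rho> = pbpo_plus_rel C \<rho>"
proof -
  note C = assms(1)
  have r: "pbpo_rule C \<rho>" and mt: "mono C (tL \<rho>)"
    using assms(2) unfolding monic_pbpo_rule_def canonical_pbpo_rule_def by auto
  have tL: "hom C (tL \<rho>) (oL \<rho>) (oL' \<rho>)" using r unfolding pbpo_rule_def by auto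
  have monom: "mono C m" if s: "pbpo_step C \<rho> m \<alpha> GL GR" for m \<alpha> GL GR
  proof -
    have m: "hom C m (oL \<rho>) GL" and a: "hom C \<alpha> GL (oL' \<rho>)" and t: "tL \<rho> = Comp C \<alpha> m"
      using s unfolding pbpo_step_def by auto
    show ?thesis unfolding mono_def
    proof (intro conjI ballI impI)
      show "m \<in> Ar C" using m unfolding hom_def by auto
      fix g h assume g: "g \<in> Ar C" and h: "h \<in> Ar C" and cg: "Cod C g = Dom C m"
        and ch: "Cod C h = Dom C m" and dd: "Dom C g = Dom C h" and e: "Comp C m g = Comp C m h"
      have hg: "hom C g (Dom C g) (oL \<rho>)" using g cg m unfolding hom_def by auto
      have hh: "hom C h (Dom C g) (oL \<rho>)" using h ch dd m unfolding hom_def by auto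
      have "Comp C (tL \<rho>) g = Comp C (tL \<rho>) h"
        using t cat_assoc[OF C hg m a] cat_assoc[OF C hh m a] e by simp
      thus "g = h" using mt g h cg ch dd m tL unfolding mono_def hom_def by auto
    qed
  qed
  have A: "pbpo_rel C \<rho> = pbpo_mono_rel C \<rho>"
    unfolding pbpo_rel_def pbpo_mono_rel_def fun_eq_iff using monom by blast
  have B: "pbpo_sm_rel C \<rho> GL GR = pbpo_plus_rel C \<rho> GL GR" for GL GR
  proof
    assume "pbpo_sm_rel C \<rho> GL GR"
    then obtain m \<alpha> GK gL u' u gR w where
      m: "hom C m (oL \<rho>) GL" and a: "hom C \<alpha> GL (oL' \<rho>)"
      and pb: "is_pullback C (oL \<rho>) (Idm C (oL \<rho>)) m (tL \<rho>) \<alpha>"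
      and pb2: "is_pullback C GK gL u' \<alpha> (rl' \<rho>)"
      and u: "hom C u (oK \<rho>) GK" and uu: "Comp C u' u = tK \<rho>"
      and uniq: "\<forall>v. hom C v (oK \<rho>) GK \<and> Comp C gL v = Comp C m (rl \<rho>) \<and> Comp C u' v = tK \<rho> \<longrightarrow> v = u"
      and po: "is_pushout C GR gR w u (rr \<rho>)"
      unfolding pbpo_sm_rel_def pbpo_step_def by blast
    have "\<forall>v. hom C v (oK \<rho>) GK \<and> Comp C u' v = tK \<rho> \<longrightarrow> v = u"
      using uniq key[OF C r pb a pb2] by blast
    thus "pbpo_plus_rel C \<rho> GL GR" unfolding pbpo_plus_rel_def
      using m a pb pb2 u uu po by blast
  next
    assume "pbpo_plus_rel C \<rho> GL GR"
    then obtain m \<alpha> GK gL u' u gR w where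
      m: "hom C m (oL \<rho>) GL" and a: "hom C \<alpha> GL (oL' \<rho>)"
      and pb: "is_pullback C (oL \<rho>) (Idm C (oL \<rho>)) m (tL \<rho>) \<alpha>"
      and pb2: "is_pullback C GK gL u' \<alpha> (rl' \<rho>)"
      and u: "hom C u (oK \<rho>) GK" and uu: "Comp C u' u = tK \<rho>"
      and uniq: "\<forall>v. hom C v (oK \<rho>) GK \<and> Comp C u' v = tK \<rho> \<longrightarrow> v = u"
      and po: "is_pushout C GR gR w u (rr \<rho>)"
      unfolding pbpo_plus_rel_def by blast
    have t: "tL \<rho> = Comp C \<alpha> m"
      using pb cat_idr[OF C tL] unfolding is_pullback_def by simp
    have gu: "Comp C gL u = Comp C m (rl \<rho>)" using key[OF C r pb a pb2 u uu] .
    have "pbpo_step C \<rho> m \<alpha> GL GR" unfolding pbpo_step_def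
      using m a t pb2 u gu uu uniq po by blast
    thus "pbpo_sm_rel C \<rho> GL GR" unfolding pbpo_sm_rel_def using pb by blast
  qed
  show ?thesis using A B by blast
qed

end
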